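(* Let $C\in\mathbb{R}^{n\times n}$ be symmetric and let $(Z,k)$ be an optimal solution of $$\max_{Z,k}\ \langle C,Z\rangle-\tfrac12k^Tk\quad\text{s.t. } Z_{ii}=k_i\ (i=1,\dots,n),\ Z\succeq0.$$ Define $w\in\mathbb{R}^n$ by $w_i=Z_{ii}$. Then $w$ is an optimal solution of $$\min_{w\in\mathbb{R}^n}\ \tfrac12w^Tw\quad\text{s.t. } \operatorname{Diag}(w)\succeq C.$$
   Context: $\operatorname{Diag}(w)$ is the diagonal matrix with diagonal $w$; $\langle C,Z\rangle=\operatorname{tr}(CZ)$. *)

theory Defs
  imports "HOL-Analysis.Analysis"
begin

definition symmetric_mat :: "real^'n^'n \<Rightarrow> bool" where
  "symmetric_mat A \<longleftrightarrow> transpose A = A"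

definition psd :: "real^'n^'n \<Rightarrow> bool" where
  "psd A \<longleftrightarrow> symmetric_mat A \<and> (\<forall>x. x \<bullet> (A *v x) \<ge> 0)"

definition Diag :: "real^'n \<Rightarrow> real^'n^'n" where
  "Diag w = (\<chi> i j. if i = j then w $ i else 0)"

definition trace_ip :: "real^'n^'n \<Rightarrow> real^'n^'n \<Rightarrow> real" where
  "trace_ip C Z = trace (C ** Z)"

definition primal_feasible :: "real^'n^'n \<Rightarrow> real^'n \<Rightarrow> bool" where
  "primal_feasible Z k \<longleftrightarrow> (\<forall>i. Z $ i $ i = k $ i) \<and> psd Z"

definition primal_obj :: "real^'n^'n \<Rightarrow> real^'n^'n \<Rightarrow> real^'n \<Rightarrow> real" where
  "primal_obj C Z k = trace_ip C Z - (1/2) * (k \<bullet> k)"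

definition primal_optimal :: "real^'n^'n \<Rightarrow> real^'n^'n \<Rightarrow> real^'n \<Rightarrow> bool" where
  "primal_optimal C Z k \<longleftrightarrow> primal_feasible Z k \<and>
     (\<forall>Z' k'. primal_feasible Z' k' \<longrightarrow> primal_obj C Z' k' \<le> primal_obj C Z k)"

definition dual_feasible :: "real^'n^'n \<Rightarrow> real^'n \<Rightarrow> bool" where
  "dual_feasible C w \<longleftrightarrow> psd (Diag w - C)"

definition dual_optimal :: "real^'n^'n \<Rightarrow> real^'n \<Rightarrow> bool" where
  "dual_optimal C w \<longleftrightarrow> dual_feasible C w \<and>
     (\<forall>w'. dual_feasible C w' \<longrightarrow> (1/2) * (w \<bullet> w) \<le> (1/2) * (w' \<bullet> w'))"

end

theory Submission
  imports Defs
begin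

definition outer :: "real^'n \<Rightarrow> real^'n^'n" where
  "outer x = (\<chi> i j. x$i * x$j)"

lemma trace_mult_sum: "trace (A ** B) = (\<Sum>i\<in>UNIV. \<Sum>j\<in>UNIV. (A::real^'n^'n)$i$j * B$j$i)"
  by (simp add: trace_def matrix_matrix_mult_def)

lemma qf_sum: "x \<bullet> ((A::real^'n^'n) *v y) = (\<Sum>i\<in>UNIV. \<Sum>j\<in>UNIV. x$i * A$i$j * y$j)"
  by (simp add: inner_vec_def matrix_vector_mult_def sum_distrib_left mult.assoc)

lemma qf_sym: "symmetric_mat Z \<Longrightarrow> x \<bullet> (Z *v y) = y \<bullet> (Z *v x)"
proof -
  assume "symmetric_mat Z"
  hence Zs: "\<And>i j. Z$j$i = Z$i$j" unfolding symmetric_mat_def by (metis transpose_def vec_lambda_beta)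
  have "x \<bullet> (Z *v y) = (\<Sum>i\<in>UNIV. \<Sum>j\<in>UNIV. x$i * Z$i$j * y$j)" by (rule qf_sum)
  also have "\<dots> = (\<Sum>j\<in>UNIV. \<Sum>i\<in>UNIV. x$i * Z$i$j * y$j)" by (rule sum.swap)
  also have "\<dots> = (\<Sum>j\<in>UNIV. \<Sum>i\<in>UNIV. y$j * Z$j$i * x$i)"
    by (intro sum.cong refl) (simp add: Zs[of _ j for j] mult_ac)
  also have "\<dots> = y \<bullet> (Z *v x)" unfolding qf_sum ..
  finally show ?thesis .
qed

lemma qf_outer: "y \<bullet> (outer x *v y) = (x \<bullet> y)^2"
  unfolding qf_sum by (simp add: outer_def power2_eq_square inner_vec_def sum_product mult_ac)

lemma trace_outer: "trace (A ** outer c) = c \<bullet> (A *v c)"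
  by (simp add: trace_mult_sum qf_sum outer_def mult_ac)

lemma trace_lin: "trace (A ** (B + s *\<^sub>R D)) = trace (A ** B) + s * trace ((A::real^'n^'n) ** D)"
  by (simp add: trace_mult_sum algebra_simps sum.distrib sum_distrib_left)

lemma trace_scale: "trace (A ** (s *\<^sub>R D)) = s * trace ((A::real^'n^'n) ** D)"
  by (simp add: trace_mult_sum algebra_simps sum_distrib_left)

lemma trace_ldiff: "trace ((A - B) ** D) = trace (A ** D) - trace ((B::real^'n^'n) ** D)"
  by (simp add: trace_mult_sum algebra_simps sum_subtractf)

lemma trace_Diag: "trace (Diag w ** D) = (\<Sum>i\<in>UNIV. w$i * D$i$i)"
proof -
  have "\<And>i. (\<Sum>j\<in>UNIV. Diag w $ i $ j * D $ j $ i) = w$i * D$i$i"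
    by (simp add: Diag_def if_distrib[of "\<lambda>a. a * _"] cong: if_cong)
  thus ?thesis by (simp add: trace_mult_sum)
qed

lemma qf_expand: "symmetric_mat Z \<Longrightarrow> (x + t *\<^sub>R y) \<bullet> (Z *v (x + t *\<^sub>R y)) =
   x \<bullet> (Z *v x) + 2 * t * (x \<bullet> (Z *v y)) + t^2 * (y \<bullet> (Z *v y))"
  using qf_sym[of Z x y]
  by (simp add: matrix_vector_right_distrib matrix_vector_mult_scaleR inner_add_left inner_add_right algebra_simps power2_eq_square)

lemma sym_iff: "symmetric_mat (A::real^'n^'n) \<longleftrightarrow> (\<forall>i j. A$i$j = A$j$i)"
  unfolding symmetric_mat_def transpose_def vec_eq_iff by auto

lemma qf_lin: "y \<bullet> ((Z + t *\<^sub>R M) *v y) = y \<bullet> (Z *v y) + t * (y \<bullet> ((M::real^'n^'n) *v y))"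
  by (simp add: qf_sum algebra_simps sum.distrib sum_distrib_left)

lemma qf_axis_l: "axis i 1 \<bullet> ((Z::real^'n^'n) *v axis j 1) = Z$i$j"
  by (simp add: inner_axis' matrix_vector_mult_basis column_def)

lemma qf_Diag: "x \<bullet> (Diag w *v x) = (\<Sum>i\<in>UNIV. w$i * x$i^2)"
proof -
  have "Diag w *v x = (\<chi> i. w$i * x$i)"
    by (simp add: vec_eq_iff matrix_vector_mult_def Diag_def if_distrib[of "\<lambda>a. a * _"] cong: if_cong)
  thus ?thesis by (simp add: inner_vec_def power2_eq_square mult_ac)
qed

lemma psd_cs:
  assumes "psd Z"
  shows "(x \<bullet> (Z *v y))^2 \<le> (x \<bullet> (Z *v x)) * (y \<bullet> ((Z::real^'n^'n) *v y))"
proof -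
  define a where "a = x \<bullet> (Z *v x)"
  define b where "b = x \<bullet> (Z *v y)"
  define c where "c = y \<bullet> (Z *v y)"
  have sym: "symmetric_mat Z" using assms psd_def by blast
  have q: "\<And>t. 0 \<le> a + 2 * t * b + t^2 * c"
    using qf_expand[OF sym] assms unfolding psd_def a_def b_def c_def by metis
  have c0: "c \<ge> 0" using assms unfolding psd_def c_def by blast
  show ?thesis
  proof (cases "c = 0")
    case True
    have "b = 0"
    proof (rule ccontr)
      assume "b \<noteq> 0"
      have "0 \<le> a + 2 * (-(a+1)/(2*b)) * b" using q[of "-(a+1)/(2*b)"] True by simp
      also have "\<dots> = -1" using \<open>b \<noteq> 0\<close> by (simp add: field_simps)
      finally show False by simp
    qed
    thus ?thesis using True by (simp add: a_def b_def c_def)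
  next
    case False
    hence cp: "c > 0" using c0 by simp
    have "0 \<le> a + 2 * (-b/c) * b + (-b/c)^2 * c" by (rule q)
    also have "\<dots> = a - b^2/c" using cp by (simp add: field_simps power2_eq_square)
    finally have "b^2/c \<le> a" by simp
    hence "b^2 \<le> a * c" using cp by (simp add: field_simps)
    thus ?thesis by (simp add: a_def b_def c_def)
  qed
qed

lemma psd_diag: "psd Z \<Longrightarrow> Z$i$i \<ge> 0"
  using qf_axis_l[of i Z i] unfolding psd_def by metis

lemma psd_zero_row: assumes "psd Z" "Z$j$j = 0" shows "Z$j$i = 0"
proof -
  have "(Z$j$i)^2 \<le> Z$j$j * Z$i$i" using psd_cs[OF assms(1), of "axis j 1" "axis i 1"]
    by (simp add: qf_axis_l)
  thus ?thesis using assms(2) by simp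
qed

lemma trace_psd_aux:
  assumes "finite S" "psd A"
  shows "\<And>Z. psd Z \<Longrightarrow> (\<forall>j. j \<notin> S \<longrightarrow> Z$j$j = 0) \<Longrightarrow> 0 \<le> trace ((A::real^'n^'n) ** Z)"
  using assms(1)
proof (induction S rule: finite_induct)
  case empty
  hence "\<And>i j. Z$i$j = 0" using psd_zero_row by blast
  hence "Z = 0" by (simp add: vec_eq_iff)
  thus ?case by (simp add: trace_def)
next
  case (insert i S)
  show ?case
  proof (cases "Z$i$i = 0")
    case True
    thus ?thesis using insert by (metis insert_iff)
  next
    case False
    hence zp: "Z$i$i > 0" using psd_diag[OF insert.prems(1), of i] by simp
    define c where "c = Z *v axis i 1"
    have cj: "\<And>j. c$j = Z$j$i" unfolding c_def
      by (simp add: matrix_vector_mult_basis column_def)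
    define Z' where "Z' = Z + (-1/Z$i$i) *\<^sub>R outer c"
    have symZ: "symmetric_mat Z" using insert.prems(1) psd_def by blast
    have "symmetric_mat Z'" using symZ unfolding sym_iff Z'_def outer_def by (simp add: mult.commute)
    moreover have "\<forall>x. 0 \<le> x \<bullet> (Z' *v x)"
    proof
      fix x
      have cs: "(x \<bullet> c)^2 \<le> (x \<bullet> (Z *v x)) * Z$i$i"
        using psd_cs[OF insert.prems(1), of x "axis i 1"] qf_axis_l[of i Z i] c_def by simp
      have "x \<bullet> (Z' *v x) = x \<bullet> (Z *v x) - (c \<bullet> x)^2 / Z$i$i"
        unfolding Z'_def qf_lin qf_outer by simp
      also have "\<dots> \<ge> 0" using cs zp by (simp add: inner_commute field_simps)
      finally show "0 \<le> x \<bullet> (Z' *v x)" .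
    qed
    ultimately have psdZ': "psd Z'" unfolding psd_def by blast
    have "\<forall>j. j \<notin> S \<longrightarrow> Z'$j$j = 0"
    proof (intro allI impI)
      fix j assume "j \<notin> S"
      show "Z'$j$j = 0"
      proof (cases "j = i")
        case True
        thus ?thesis using zp by (simp add: Z'_def outer_def cj power2_eq_square)
      next
        case False
        hence "Z$j$j = 0" using insert.prems(2) \<open>j \<notin> S\<close> by simp
        moreover have "Z$j$i = 0" using psd_zero_row[OF insert.prems(1) \<open>Z$j$j = 0\<close>] .
        ultimately show ?thesis by (simp add: Z'_def outer_def cj)
      qed
    qed
    hence t': "0 \<le> trace (A ** Z')" using insert.IH psdZ' by blast
    have "Z = Z' + (1/Z$i$i) *\<^sub>R outer c" unfolding Z'_def by simp
    from arg_cong[OF this, of "\<lambda>M. trace (A ** M)"]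
    have "trace (A ** Z) = trace (A ** Z') + (1/Z$i$i) * (c \<bullet> (A *v c))"
      by (simp only: trace_lin trace_outer)
    moreover have "c \<bullet> (A *v c) \<ge> 0" using insert.prems psd_def \<open>psd A\<close> by blast
    ultimately show ?thesis using t' zp by simp
  qed
qed

lemma trace_psd: "psd A \<Longrightarrow> psd Z \<Longrightarrow> 0 \<le> trace ((A::real^'n^'n) ** Z)"
  using trace_psd_aux[of UNIV A Z] by simp

theorem lemmaC2:
  fixes C Z :: "real^'n^'n" and k :: "real^'n"
  assumes "symmetric_mat C"
    and "primal_optimal C Z k"
  shows "dual_optimal C (\<chi> i. Z $ i $ i)"
proof -
  have fe: "primal_feasible Z k" and
    opt: "\<And>Z' k'. primal_feasible Z' k' \<Longrightarrow> primal_obj C Z' k' \<le> primal_obj C Z k"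
    using assms(2) unfolding primal_optimal_def by blast+
  have Zk: "\<And>i. Z$i$i = k$i" and psdZ: "psd Z" using fe primal_feasible_def by blast+
  have wk: "(\<chi> i. Z $ i $ i) = k" using Zk by (simp add: vec_eq_iff)
  have symZ: "symmetric_mat Z" using psdZ psd_def by blast
  define a where "a = trace (C ** Z)"
  define b where "b = k \<bullet> k"
  have b0: "b \<ge> 0" unfolding b_def by simp
  \<comment> \<open>rank-one perturbation gives dual feasibility\<close>
  have pert: "x \<bullet> (C *v x) \<le> (\<Sum>i\<in>UNIV. k$i * x$i^2)" for x
  proof (rule ccontr)
    define d :: "real^'n" where "d = (\<chi> i. x$i^2)"
    define c where "c = x \<bullet> (C *v x) - k \<bullet> d"
    define D where "D = d \<bullet> d"
    have kd: "k \<bullet> d = (\<Sum>i\<in>UNIV. k$i * x$i^2)" by (simp add: d_def inner_vec_def)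
    assume "\<not> ?thesis"
    hence cp: "c > 0" using kd c_def by simp
    have D0: "D \<ge> 0" unfolding D_def by simp
    define t where "t = c / (D + 1)"
    have tp: "t > 0" using cp D0 by (simp add: t_def)
    have "primal_feasible (Z + t *\<^sub>R outer x) (k + t *\<^sub>R d)"
      unfolding primal_feasible_def psd_def
    proof (intro conjI allI)
      show "\<And>i. (Z + t *\<^sub>R outer x) $ i $ i = (k + t *\<^sub>R d) $ i"
        by (simp add: Zk outer_def d_def power2_eq_square)
      show "symmetric_mat (Z + t *\<^sub>R outer x)" using symZ unfolding sym_iff outer_def
        by (simp add: mult.commute)
      fix y show "0 \<le> y \<bullet> ((Z + t *\<^sub>R outer x) *v y)"
        unfolding qf_lin qf_outer using psdZ tp unfolding psd_def
        by (simp add: add_nonneg_nonneg)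
    qed
    from opt[OF this] have "trace (C ** (Z + t *\<^sub>R outer x)) - 1/2 * ((k + t *\<^sub>R d) \<bullet> (k + t *\<^sub>R d))
       \<le> trace (C ** Z) - 1/2 * (k \<bullet> k)" unfolding primal_obj_def trace_ip_def .
    hence "t * (x \<bullet> (C *v x)) - t * (k \<bullet> d) - 1/2 * t^2 * D \<le> 0"
      unfolding trace_lin trace_outer D_def
      by (simp add: inner_add_left inner_add_right algebra_simps power2_eq_square inner_commute)
    hence "t * c \<le> 1/2 * t^2 * D" unfolding c_def by (simp add: algebra_simps)
    hence "c \<le> 1/2 * t * D" using tp by (simp add: power2_eq_square)
    hence "c * (D + 1) \<le> 1/2 * c * D" using D0 by (simp add: t_def field_simps)
    moreover have "c * (D + 1) = c * D + c" by (simp add: algebra_simps)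
    moreover have "c * D \<ge> 0" using cp D0 by simp
    ultimately show False using cp by linarith
  qed
  have dfk: "dual_feasible C k" unfolding dual_feasible_def psd_def
  proof (intro conjI allI)
    show "symmetric_mat (Diag k - C)" using assms(1) unfolding sym_iff Diag_def by simp
    fix x show "0 \<le> x \<bullet> ((Diag k - C) *v x)"
      using pert[of x] by (simp add: matrix_vector_mult_diff_rdistrib inner_diff_right qf_Diag)
  qed
  \<comment> \<open>scaling gives b \<le> a\<close>
  have scal: "t * a - 1/2 * t^2 * b \<le> a - 1/2 * b" if "t \<ge> 0" for t
  proof -
    have "primal_feasible (t *\<^sub>R Z) (t *\<^sub>R k)"
      unfolding primal_feasible_def psd_def
    proof (intro conjI allI)
      show "\<And>i. (t *\<^sub>R Z) $ i $ i = (t *\<^sub>R k) $ i" by (simp add: Zk)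
      show "symmetric_mat (t *\<^sub>R Z)" using symZ unfolding sym_iff by simp
      fix y show "0 \<le> y \<bullet> ((t *\<^sub>R Z) *v y)"
        using qf_lin[of y 0 t Z] psdZ that unfolding psd_def by simp
    qed
    from opt[OF this] show ?thesis
      unfolding primal_obj_def trace_ip_def a_def b_def trace_scale
      by (simp add: power2_eq_square mult_ac)
  qed
  have ba: "b \<le> a"
  proof (cases "b = 0")
    case True thus ?thesis using scal[of 0] by simp
  next
    case False
    hence bp: "b > 0" using b0 by simp
    have a0: "a \<ge> b/2" using scal[of 0] by simp
    have "a/b * a - 1/2 * (a/b)^2 * b \<le> a - 1/2 * b" using scal[of "a/b"] a0 bp by simp
    hence "a^2 \<le> 2*a*b - b^2" using bp by (simp add: field_simps power2_eq_square)
    hence "(a-b)^2 \<le> 0" by (simp add: power2_eq_square algebra_simps)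
    thus ?thesis by simp
  qed
  show ?thesis unfolding dual_optimal_def wk
  proof (intro conjI allI impI)
    show "dual_feasible C k" by (rule dfk)
    fix w' assume "dual_feasible C w'"
    hence "0 \<le> trace ((Diag w' - C) ** Z)" using trace_psd psdZ dual_feasible_def by blast
    hence "a \<le> w' \<bullet> k" unfolding trace_ldiff trace_Diag a_def by (simp add: Zk inner_vec_def)
    moreover have "0 \<le> (w' - k) \<bullet> (w' - k)" by simp
    ultimately show "1/2 * (k \<bullet> k) \<le> 1/2 * (w' \<bullet> w')" using ba unfolding b_def
      by (simp add: inner_diff_left inner_diff_right inner_commute)
  qed
qed

end
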